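(* Let $G,H,K,L$ be graphs with $G\mid K$ and $H\mid L$. If $K$ and $L$ are strongly disjoint, then $G$ and $H$ are strongly disjoint. If $K$ and $L$ are weakly disjoint, then $G$ and $H$ are weakly disjoint.
   Context: A weight function on finite $U$ is $\alpha:U\times U\to\mathbb{R}$, $\alpha\ge0$, symmetric, summing to $1$; degree $p(u)=\sum_{u'}\alpha(u,u')$; a graph is $(U,\alpha)$. For graphs $G=(U,\alpha)$, $H=(V,\beta)$ with degrees $p,q$, $H\mid G$ means there is a surjective $\phi:U\to V$ with (i) $q(v)=\sum_{u\in\phi^{-1}(v)}p(u)$ for all $v$, and (ii) $q(v)\sum_{u'\in\phi^{-1}(v')}\alpha(u,u')=p(u)\beta(v,v')$ for all $v,v'$, $u\in\phi^{-1}(v)$. A weight joining of $\alpha,\beta$ is a weight function $\gamma$ on $U\times V$ with degree $r(u,v)=\sum_{(u',v')}\gamma((u,v),(u',v'))$ such that $\sum_v r(u,v)=p(u)$, $\sum_u r(u,v)=q(v)$, $p(u)\sum_{\tilde v}\gamma((u,v),(u',\tilde v))=\alpha(u,u')r(u,v)$ and $q(v)\sum_{\tilde u}\gamma((u,v),(\tilde u,v'))=\beta(v,v')r(u,v)$ for all $u,u',v,v'$. Graphs $(U,\alpha),(V,\beta)$ are strongly disjoint if the only weight joining is $\alpha\otimes\beta$, $(\alpha\otimes\beta)((u,v),(u',v'))=\alpha(u,u')\beta(v,v')$; weakly disjoint if every weight joining has degree $r(u,v)=p(u)q(v)$. *)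

theory Defs
  imports Complex_Main
begin

text \<open>A graph is a weight function on a finite vertex set; the vertex set is
  modelled as the (finite) universe of a type.\<close>

definition weight_fun :: "('a::finite \<Rightarrow> 'a \<Rightarrow> real) \<Rightarrow> bool" where
  "weight_fun \<alpha> \<longleftrightarrow> (\<forall>u u'. 0 \<le> \<alpha> u u') \<and> (\<forall>u u'. \<alpha> u u' = \<alpha> u' u)
     \<and> (\<Sum>u\<in>UNIV. \<Sum>u'\<in>UNIV. \<alpha> u u') = 1"

definition deg :: "('a::finite \<Rightarrow> 'a \<Rightarrow> real) \<Rightarrow> 'a \<Rightarrow> real" where
  "deg \<alpha> u = (\<Sum>u'\<in>UNIV. \<alpha> u u')"

text \<open>\<open>graph_divides \<beta> \<alpha>\<close> means H | G for H = (V,\<beta>), G = (U,\<alpha>).\<close>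
definition graph_divides :: "('b::finite \<Rightarrow> 'b \<Rightarrow> real) \<Rightarrow> ('a::finite \<Rightarrow> 'a \<Rightarrow> real) \<Rightarrow> bool" where
  "graph_divides \<beta> \<alpha> \<longleftrightarrow> (\<exists>\<phi> :: 'a \<Rightarrow> 'b. surj \<phi> \<and>
     (\<forall>v. deg \<beta> v = (\<Sum>u\<in>\<phi> -` {v}. deg \<alpha> u)) \<and>
     (\<forall>v v' u. \<phi> u = v \<longrightarrow>
        deg \<beta> v * (\<Sum>u'\<in>\<phi> -` {v'}. \<alpha> u u') = deg \<alpha> u * \<beta> v v'))"

definition weight_joining ::
  "('a::finite \<Rightarrow> 'a \<Rightarrow> real) \<Rightarrow> ('b::finite \<Rightarrow> 'b \<Rightarrow> real)
     \<Rightarrow> ('a \<times> 'b \<Rightarrow> 'a \<times> 'b \<Rightarrow> real) \<Rightarrow> bool" where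
  "weight_joining \<alpha> \<beta> \<gamma> \<longleftrightarrow> weight_fun \<gamma> \<and>
     (\<forall>u. (\<Sum>v\<in>UNIV. deg \<gamma> (u,v)) = deg \<alpha> u) \<and>
     (\<forall>v. (\<Sum>u\<in>UNIV. deg \<gamma> (u,v)) = deg \<beta> v) \<and>
     (\<forall>u u' v. deg \<alpha> u * (\<Sum>v'\<in>UNIV. \<gamma> (u,v) (u',v')) = \<alpha> u u' * deg \<gamma> (u,v)) \<and>
     (\<forall>u v v'. deg \<beta> v * (\<Sum>u'\<in>UNIV. \<gamma> (u,v) (u',v')) = \<beta> v v' * deg \<gamma> (u,v))"

definition tensor_weight ::
  "('a \<Rightarrow> 'a \<Rightarrow> real) \<Rightarrow> ('b \<Rightarrow> 'b \<Rightarrow> real) \<Rightarrow> ('a \<times> 'b \<Rightarrow> 'a \<times> 'b \<Rightarrow> real)" where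
  "tensor_weight \<alpha> \<beta> = (\<lambda>(u,v) (u',v'). \<alpha> u u' * \<beta> v v')"

definition strongly_disjoint :: "('a::finite \<Rightarrow> 'a \<Rightarrow> real) \<Rightarrow> ('b::finite \<Rightarrow> 'b \<Rightarrow> real) \<Rightarrow> bool" where
  "strongly_disjoint \<alpha> \<beta> \<longleftrightarrow> (\<forall>\<gamma>. weight_joining \<alpha> \<beta> \<gamma> \<longrightarrow> \<gamma> = tensor_weight \<alpha> \<beta>)"

definition weakly_disjoint :: "('a::finite \<Rightarrow> 'a \<Rightarrow> real) \<Rightarrow> ('b::finite \<Rightarrow> 'b \<Rightarrow> real) \<Rightarrow> bool" where
  "weakly_disjoint \<alpha> \<beta> \<longleftrightarrow> (\<forall>\<gamma>. weight_joining \<alpha> \<beta> \<gamma> \<longrightarrow>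
     (\<forall>u v. deg \<gamma> (u,v) = deg \<alpha> u * deg \<beta> v))"

end

theory Submission
  imports Defs
begin

lemma fib_sum:
  fixes f :: "'k::finite \<Rightarrow> real" and \<phi> :: "'k \<Rightarrow> 'g::finite"
  shows "(\<Sum>k\<in>UNIV. f k) = (\<Sum>g\<in>UNIV. \<Sum>k\<in>\<phi> -` {g}. f k)"
proof -
  have "(\<Sum>g\<in>UNIV. \<Sum>k\<in>\<phi> -` {g}. f k) = (\<Sum>g\<in>UNIV. sum f {x. x \<in> UNIV \<and> \<phi> x = g})"
    by (intro sum.cong) auto
  also have "\<dots> = sum f UNIV" by (rule sum.group) auto
  finally show ?thesis by simp
qed

lemma pair_sum:
  fixes f :: "'a::finite \<times> 'b::finite \<Rightarrow> real"
  shows "(\<Sum>x\<in>UNIV. f x) = (\<Sum>a\<in>UNIV. \<Sum>b\<in>UNIV. f (a,b))"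
  by (simp add: sum.cartesian_product' flip: UNIV_Times_UNIV)

lemma deg_pair:
  fixes \<gamma> :: "'a::finite \<times> 'b::finite \<Rightarrow> 'a \<times> 'b \<Rightarrow> real"
  shows "deg \<gamma> x = (\<Sum>a\<in>UNIV. \<Sum>b\<in>UNIV. \<gamma> x (a,b))"
  unfolding deg_def by (rule pair_sum)

lemma wf_nonneg: "weight_fun \<alpha> \<Longrightarrow> 0 \<le> \<alpha> u u'"
  unfolding weight_fun_def by blast

lemma wf_sym: "weight_fun \<alpha> \<Longrightarrow> \<alpha> u u' = \<alpha> u' u"
  unfolding weight_fun_def by blast

lemma deg_nonneg: "weight_fun \<alpha> \<Longrightarrow> 0 \<le> deg \<alpha> u"
  unfolding deg_def by (intro sum_nonneg) (auto intro: wf_nonneg)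

lemma sum_zero_elem:
  fixes f :: "'a \<Rightarrow> real"
  assumes "finite A" "\<And>x. x \<in> A \<Longrightarrow> 0 \<le> f x" "sum f A = 0" "x \<in> A"
  shows "f x = 0"
  using assms sum_nonneg_eq_0_iff by blast

lemma deg_zero: "weight_fun \<alpha> \<Longrightarrow> deg \<alpha> u = 0 \<Longrightarrow> \<alpha> u u' = 0"
  unfolding deg_def by (rule sum_zero_elem[where A=UNIV]) (auto intro: wf_nonneg)

lemma wf_total: "weight_fun \<alpha> \<Longrightarrow> (\<Sum>u\<in>UNIV. deg \<alpha> u) = 1"
  unfolding weight_fun_def deg_def by blast

lemma J_r_left:
  assumes "weight_joining \<alpha> \<beta> \<gamma>" "deg \<alpha> u = 0"
  shows "deg \<gamma> (u,v) = 0"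
proof -
  have w: "weight_fun \<gamma>" using assms unfolding weight_joining_def by blast
  have "(\<Sum>v\<in>UNIV. deg \<gamma> (u,v)) = 0" using assms unfolding weight_joining_def by simp
  then show ?thesis by (rule sum_zero_elem[rotated 2]) (auto intro: deg_nonneg[OF w])
qed

lemma J_r_right:
  assumes "weight_joining \<alpha> \<beta> \<gamma>" "deg \<beta> v = 0"
  shows "deg \<gamma> (u,v) = 0"
proof -
  have w: "weight_fun \<gamma>" using assms unfolding weight_joining_def by blast
  have "(\<Sum>u\<in>UNIV. deg \<gamma> (u,v)) = 0" using assms unfolding weight_joining_def by simp
  then show ?thesis by (rule sum_zero_elem[rotated 2]) (auto intro: deg_nonneg[OF w])
qed

lemma J_T:
  assumes "weight_joining \<alpha> \<beta> \<gamma>" "deg \<alpha> u \<noteq> 0"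
  shows "(\<Sum>v'\<in>UNIV. \<gamma> (u,v) (u',v')) = \<alpha> u u' * deg \<gamma> (u,v) / deg \<alpha> u"
proof -
  have "deg \<alpha> u * (\<Sum>v'\<in>UNIV. \<gamma> (u,v) (u',v')) = \<alpha> u u' * deg \<gamma> (u,v)"
    using assms unfolding weight_joining_def by blast
  then show ?thesis using assms(2) by (simp add: field_simps)
qed

lemma J_F2:
  assumes "weight_joining \<alpha> \<beta> \<gamma>" "\<alpha> u u' = 0"
  shows "\<gamma> (u,v) (u',v') = 0"
proof -
  have w: "weight_fun \<gamma>" using assms unfolding weight_joining_def by blast
  show ?thesis
  proof (cases "deg \<alpha> u = 0")
    case True
    then have "deg \<gamma> (u,v) = 0" using J_r_left assms by blast
    then show ?thesis using deg_zero[OF w] by blast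
  next
    case False
    then have "(\<Sum>v'\<in>UNIV. \<gamma> (u,v) (u',v')) = 0" using J_T[OF assms(1) False] assms(2) by simp
    then show ?thesis by (rule sum_zero_elem[rotated 2]) (auto intro: wf_nonneg[OF w])
  qed
qed


locale divi =
  fixes aG :: "'g::finite \<Rightarrow> 'g \<Rightarrow> real" and aK :: "'k::finite \<Rightarrow> 'k \<Rightarrow> real"
    and \<phi> :: "'k \<Rightarrow> 'g"
  assumes wG: "weight_fun aG" and wK: "weight_fun aK"
    and D1: "\<And>g. deg aG g = (\<Sum>k\<in>\<phi> -` {g}. deg aK k)"
    and D2: "\<And>g' k. deg aG (\<phi> k) * (\<Sum>k'\<in>\<phi> -` {g'}. aK k k') = deg aK k * aG (\<phi> k) g'"
begin

lemma F6: "deg aG (\<phi> k) = 0 \<Longrightarrow> deg aK k = 0"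
proof -
  assume a: "deg aG (\<phi> k) = 0"
  have "(\<Sum>k\<in>\<phi> -` {\<phi> k}. deg aK k) = 0" using D1[of "\<phi> k"] a by simp
  then show ?thesis by (rule sum_zero_elem[rotated 2]) (auto intro: deg_nonneg[OF wK])
qed

lemma F3: "(\<Sum>k'\<in>\<phi> -` {g'}. aK k k') = deg aK k * aG (\<phi> k) g' / deg aG (\<phi> k)"
proof (cases "deg aG (\<phi> k) = 0")
  case True
  then have "deg aK k = 0" by (rule F6)
  then show ?thesis using deg_zero[OF wK] by simp
next
  case False
  then show ?thesis using D2[where g'=g' and k=k] by (simp add: field_simps)
qed

lemma F1: "(\<Sum>k\<in>\<phi> -` {g}. \<Sum>k'\<in>\<phi> -` {g'}. aK k k') = aG g g'"
proof (cases "deg aG g = 0")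
  case True
  then have "aG g g' = 0" by (rule deg_zero[OF wG])
  moreover have "aK k k' = 0" if "k \<in> \<phi> -` {g}" for k k'
    using F6[of k] that True deg_zero[OF wK] by auto
  ultimately show ?thesis by simp
next
  case False
  have "(\<Sum>k\<in>\<phi> -` {g}. \<Sum>k'\<in>\<phi> -` {g'}. aK k k') = (\<Sum>k\<in>\<phi> -` {g}. deg aK k * aG g g' / deg aG g)"
    by (intro sum.cong) (auto simp: F3)
  also have "\<dots> = (\<Sum>k\<in>\<phi> -` {g}. deg aK k) * aG g g' / deg aG g"
    by (simp add: sum_distrib_right sum_divide_distrib)
  also have "\<dots> = aG g g'" using False D1[of g] by simp
  finally show ?thesis .
qed

lemma F2': "aG (\<phi> k) (\<phi> k') = 0 \<Longrightarrow> aK k k' = 0"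
proof -
  assume a: "aG (\<phi> k) (\<phi> k') = 0"
  have "(\<Sum>k''\<in>\<phi> -` {\<phi> k'}. aK k k'') = 0"
    using F3[where g'="\<phi> k'" and k=k] a by simp
  then show ?thesis by (rule sum_zero_elem[rotated 2]) (auto intro: wf_nonneg[OF wK])
qed

end


definition lift :: "('k \<Rightarrow> 'g) \<Rightarrow> ('k \<Rightarrow> 'k \<Rightarrow> real) \<Rightarrow> ('g \<Rightarrow> 'g \<Rightarrow> real)
   \<Rightarrow> ('g \<times> 'h \<Rightarrow> 'g \<times> 'h \<Rightarrow> real) \<Rightarrow> ('k \<times> 'h \<Rightarrow> 'k \<times> 'h \<Rightarrow> real)" where
  "lift \<phi> aK aG \<gamma> = (\<lambda>(k,h) (k',h'). \<gamma> (\<phi> k, h) (\<phi> k', h') * aK k k' / aG (\<phi> k) (\<phi> k'))"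

lemma lift_app: "lift \<phi> aK aG \<gamma> (k,h) (k',h') = \<gamma> (\<phi> k, h) (\<phi> k', h') * aK k k' / aG (\<phi> k) (\<phi> k')"
  unfolding lift_def by simp

locale liftctx = divi aG aK \<phi>
  for aG :: "'g::finite \<Rightarrow> 'g \<Rightarrow> real" and aK :: "'k::finite \<Rightarrow> 'k \<Rightarrow> real"
    and \<phi> :: "'k \<Rightarrow> 'g" +
  fixes bH :: "'h::finite \<Rightarrow> 'h \<Rightarrow> real" and \<gamma> :: "'g \<times> 'h \<Rightarrow> 'g \<times> 'h \<Rightarrow> real"
  assumes wH: "weight_fun bH" and J: "weight_joining aG bH \<gamma>"
begin

lemma wgam: "weight_fun \<gamma>" using J unfolding weight_joining_def by blast

abbreviation "L \<equiv> lift \<phi> aK aG \<gamma>"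

lemma F7: "(\<Sum>k'\<in>UNIV. L (k,h) (k',h'))
   = deg aK k / deg aG (\<phi> k) * (\<Sum>g'\<in>UNIV. \<gamma> (\<phi> k, h) (g',h'))"
proof -
  have "(\<Sum>k'\<in>UNIV. L (k,h) (k',h')) = (\<Sum>g'\<in>UNIV. \<Sum>k'\<in>\<phi> -` {g'}. L (k,h) (k',h'))"
    by (rule fib_sum)
  also have "\<dots> = (\<Sum>g'\<in>UNIV. \<gamma> (\<phi> k, h) (g', h') / aG (\<phi> k) g' * (\<Sum>k'\<in>\<phi> -` {g'}. aK k k'))"
    by (intro sum.cong refl) (auto simp: lift_app sum_distrib_left)
  also have "\<dots> = (\<Sum>g'\<in>UNIV. deg aK k / deg aG (\<phi> k) * \<gamma> (\<phi> k, h) (g',h'))"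
  proof (intro sum.cong refl)
    fix g'
    show "\<gamma> (\<phi> k, h) (g', h') / aG (\<phi> k) g' * (\<Sum>k'\<in>\<phi> -` {g'}. aK k k') =
          deg aK k / deg aG (\<phi> k) * \<gamma> (\<phi> k, h) (g', h')"
    proof (cases "aG (\<phi> k) g' = 0")
      case True
      then show ?thesis using J_F2[OF J True] by simp
    next
      case False
      then show ?thesis unfolding F3 by (simp add: field_simps)
    qed
  qed
  also have "\<dots> = deg aK k / deg aG (\<phi> k) * (\<Sum>g'\<in>UNIV. \<gamma> (\<phi> k, h) (g',h'))"
    by (simp add: sum_distrib_left)
  finally show ?thesis .
qed

lemma LD: "deg L (k,h) = deg aK k * deg \<gamma> (\<phi> k, h) / deg aG (\<phi> k)"
proof -
  have "deg L (k,h) = (\<Sum>k'\<in>UNIV. \<Sum>h'\<in>UNIV. L (k,h) (k',h'))" by (rule deg_pair)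
  also have "\<dots> = (\<Sum>h'\<in>UNIV. \<Sum>k'\<in>UNIV. L (k,h) (k',h'))" by (rule sum.swap)
  also have "\<dots> = (\<Sum>h'\<in>UNIV. deg aK k / deg aG (\<phi> k) * (\<Sum>g'\<in>UNIV. \<gamma> (\<phi> k, h) (g',h')))"
    by (simp add: F7)
  also have "\<dots> = deg aK k / deg aG (\<phi> k) * (\<Sum>h'\<in>UNIV. \<Sum>g'\<in>UNIV. \<gamma> (\<phi> k, h) (g',h'))"
    by (simp only: sum_distrib_left)
  also have "\<dots> = deg aK k / deg aG (\<phi> k) * (\<Sum>g'\<in>UNIV. \<Sum>h'\<in>UNIV. \<gamma> (\<phi> k, h) (g',h'))"
    by (subst sum.swap) (rule refl)
  also have "\<dots> = deg aK k / deg aG (\<phi> k) * deg \<gamma> (\<phi> k, h)" by (simp add: deg_pair)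
  finally show ?thesis by simp
qed

lemma P1: "(\<Sum>k\<in>\<phi> -` {g}. \<Sum>k'\<in>\<phi> -` {g'}. L (k,h) (k',h')) = \<gamma> (g,h) (g',h')"
proof -
  have "(\<Sum>k\<in>\<phi> -` {g}. \<Sum>k'\<in>\<phi> -` {g'}. L (k,h) (k',h'))
      = (\<Sum>k\<in>\<phi> -` {g}. \<Sum>k'\<in>\<phi> -` {g'}. \<gamma> (g,h) (g',h') / aG g g' * aK k k')"
    by (intro sum.cong refl) (auto simp: lift_app)
  also have "\<dots> = \<gamma> (g,h) (g',h') / aG g g' * aG g g'"
    by (simp only: sum_distrib_left[symmetric] F1)
  also have "\<dots> = \<gamma> (g,h) (g',h')"
    using J_F2[OF J, of g g' h h'] by (cases "aG g g' = 0") auto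
  finally show ?thesis .
qed

lemma F5: "(\<Sum>k\<in>\<phi> -` {g}. deg aK k * deg \<gamma> (g,h) / deg aG g) = deg \<gamma> (g,h)"
proof (cases "deg aG g = 0")
  case True
  then show ?thesis using J_r_left[OF J True] by simp
next
  case False
  have "(\<Sum>k\<in>\<phi> -` {g}. deg aK k * deg \<gamma> (g,h) / deg aG g)
      = (\<Sum>k\<in>\<phi> -` {g}. deg aK k) * deg \<gamma> (g,h) / deg aG g"
    by (simp add: sum_distrib_right sum_divide_distrib)
  also have "\<dots> = deg \<gamma> (g,h)" using False D1[of g] by simp
  finally show ?thesis .
qed

lemma LJ2: "(\<Sum>k\<in>UNIV. deg L (k,h)) = (\<Sum>g\<in>UNIV. deg \<gamma> (g,h))"
proof -
  have "(\<Sum>k\<in>UNIV. deg L (k,h)) = (\<Sum>g\<in>UNIV. \<Sum>k\<in>\<phi> -` {g}. deg L (k,h))" by (rule fib_sum)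
  also have "\<dots> = (\<Sum>g\<in>UNIV. \<Sum>k\<in>\<phi> -` {g}. deg aK k * deg \<gamma> (g,h) / deg aG g)"
    by (intro sum.cong refl) (auto simp: LD)
  also have "\<dots> = (\<Sum>g\<in>UNIV. deg \<gamma> (g,h))" by (simp add: F5)
  finally show ?thesis .
qed

lemma L_wf: "weight_fun L"
proof -
  have nn: "0 \<le> L x y" for x y
    using wf_nonneg[OF wgam] wf_nonneg[OF wK] wf_nonneg[OF wG]
    by (cases x; cases y) (simp add: lift_app)
  have sy: "L x y = L y x" for x y
    using wf_sym[OF wgam] wf_sym[OF wK] wf_sym[OF wG]
    by (cases x; cases y) (simp add: lift_app)
  have "(\<Sum>x\<in>UNIV. deg L x) = (\<Sum>k\<in>UNIV. \<Sum>h\<in>UNIV. deg L (k,h))" by (rule pair_sum)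
  also have "\<dots> = (\<Sum>h\<in>UNIV. \<Sum>k\<in>UNIV. deg L (k,h))" by (rule sum.swap)
  also have "\<dots> = (\<Sum>h\<in>UNIV. \<Sum>g\<in>UNIV. deg \<gamma> (g,h))" by (simp add: LJ2)
  also have "\<dots> = (\<Sum>g\<in>UNIV. \<Sum>h\<in>UNIV. deg \<gamma> (g,h))" by (rule sum.swap)
  also have "\<dots> = (\<Sum>x\<in>UNIV. deg \<gamma> x)" by (rule pair_sum[symmetric])
  also have "\<dots> = 1" by (rule wf_total[OF wgam])
  finally have "(\<Sum>x\<in>UNIV. deg L x) = 1" .
  then show ?thesis using nn sy unfolding weight_fun_def deg_def by blast
qed

lemma L_joining: "weight_joining aK bH L"
proof -
  have j1: "(\<Sum>h\<in>UNIV. deg L (k,h)) = deg aK k" for k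
  proof (cases "deg aG (\<phi> k) = 0")
    case True
    then show ?thesis using F6[OF True] by (simp add: LD)
  next
    case False
    have "(\<Sum>h\<in>UNIV. deg L (k,h)) = deg aK k * (\<Sum>h\<in>UNIV. deg \<gamma> (\<phi> k,h)) / deg aG (\<phi> k)"
      by (simp add: LD sum_distrib_left sum_divide_distrib)
    also have "\<dots> = deg aK k" using J False unfolding weight_joining_def by simp
    finally show ?thesis .
  qed
  have j2: "(\<Sum>k\<in>UNIV. deg L (k,h)) = deg bH h" for h
    using LJ2 J unfolding weight_joining_def by simp
  have j3: "deg aK k * (\<Sum>h'\<in>UNIV. L (k,h) (k',h')) = aK k k' * deg L (k,h)" for k k' h
  proof -
    have s: "(\<Sum>h'\<in>UNIV. L (k,h) (k',h')) = aK k k' / aG (\<phi> k) (\<phi> k') * (\<Sum>h'\<in>UNIV. \<gamma> (\<phi> k, h) (\<phi> k', h'))"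
      by (simp add: lift_app sum_distrib_left sum_divide_distrib mult.commute)
    show ?thesis
    proof (cases "deg aG (\<phi> k) = 0")
      case True
      then show ?thesis using F6[OF True] by (simp add: LD)
    next
      case False
      note T = J_T[OF J False, of h "\<phi> k'"]
      show ?thesis
      proof (cases "aG (\<phi> k) (\<phi> k') = 0")
        case True
        then show ?thesis using F2'[OF True] s by simp
      next
        case False2: False
        show ?thesis unfolding s T LD using False False2 by (simp add: field_simps)
      qed
    qed
  qed
  have j4: "deg bH h * (\<Sum>k'\<in>UNIV. L (k,h) (k',h')) = bH h h' * deg L (k,h)" for k h h'
  proof -
    have "deg bH h * (\<Sum>g'\<in>UNIV. \<gamma> (\<phi> k, h) (g',h')) = bH h h' * deg \<gamma> (\<phi> k, h)"
      using J unfolding weight_joining_def by blast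
    then show ?thesis unfolding F7 LD
      by (metis (no_types, lifting) mult.left_commute times_divide_eq_left times_divide_eq_right)
  qed
  show ?thesis unfolding weight_joining_def using L_wf j1 j2 j3 j4 by blast
qed

end


definition swp :: "('a \<times> 'b \<Rightarrow> 'a \<times> 'b \<Rightarrow> real) \<Rightarrow> ('b \<times> 'a \<Rightarrow> 'b \<times> 'a \<Rightarrow> real)" where
  "swp \<gamma> = (\<lambda>(b,a) (d,c). \<gamma> (a,b) (c,d))"

lemma swp_app: "swp \<gamma> (b,a) (d,c) = \<gamma> (a,b) (c,d)"
  unfolding swp_def by simp

lemma swp_swp: "swp (swp \<gamma>) = \<gamma>"
  unfolding swp_def by (auto simp: fun_eq_iff)

lemma swp_tensor: "swp (tensor_weight a b) = tensor_weight b a"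
  unfolding swp_def tensor_weight_def by (auto simp: fun_eq_iff)

lemma deg_swp:
  fixes \<gamma> :: "'a::finite \<times> 'b::finite \<Rightarrow> 'a \<times> 'b \<Rightarrow> real"
  shows "deg (swp \<gamma>) (b,a) = deg \<gamma> (a,b)"
proof -
  have "deg (swp \<gamma>) (b,a) = (\<Sum>d\<in>UNIV. \<Sum>c\<in>UNIV. swp \<gamma> (b,a) (d,c))" by (rule deg_pair)
  also have "\<dots> = (\<Sum>d\<in>UNIV. \<Sum>c\<in>UNIV. \<gamma> (a,b) (c,d))" by (simp add: swp_app)
  also have "\<dots> = (\<Sum>c\<in>UNIV. \<Sum>d\<in>UNIV. \<gamma> (a,b) (c,d))" by (rule sum.swap)
  also have "\<dots> = deg \<gamma> (a,b)" by (rule deg_pair[symmetric])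
  finally show ?thesis .
qed

lemma swp_joining:
  fixes \<gamma> :: "'a::finite \<times> 'b::finite \<Rightarrow> 'a \<times> 'b \<Rightarrow> real"
  assumes J: "weight_joining \<alpha> \<beta> \<gamma>"
  shows "weight_joining \<beta> \<alpha> (swp \<gamma>)"
proof -
  have w: "weight_fun \<gamma>" using J unfolding weight_joining_def by blast
  have nn: "0 \<le> swp \<gamma> x y" for x y
    using wf_nonneg[OF w] by (cases x; cases y) (simp add: swp_app)
  have sy: "swp \<gamma> x y = swp \<gamma> y x" for x y
    using wf_sym[OF w] by (cases x; cases y) (simp add: swp_app)
  have "(\<Sum>x\<in>UNIV. deg (swp \<gamma>) x) = (\<Sum>b\<in>UNIV. \<Sum>a\<in>UNIV. deg (swp \<gamma>) (b,a))" by (rule pair_sum)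
  also have "\<dots> = (\<Sum>b\<in>UNIV. \<Sum>a\<in>UNIV. deg \<gamma> (a,b))" by (simp add: deg_swp)
  also have "\<dots> = (\<Sum>a\<in>UNIV. \<Sum>b\<in>UNIV. deg \<gamma> (a,b))" by (rule sum.swap)
  also have "\<dots> = (\<Sum>x\<in>UNIV. deg \<gamma> x)" by (rule pair_sum[symmetric])
  also have "\<dots> = 1" by (rule wf_total[OF w])
  finally have "(\<Sum>x\<in>UNIV. deg (swp \<gamma>) x) = 1" .
  then have wf: "weight_fun (swp \<gamma>)" using nn sy unfolding weight_fun_def deg_def by blast
  show ?thesis unfolding weight_joining_def
    using wf J unfolding weight_joining_def by (simp add: deg_swp swp_app)
qed

theorem proposition4p4:
  fixes aG :: "'g::finite \<Rightarrow> 'g \<Rightarrow> real" and bH :: "'h::finite \<Rightarrow> 'h \<Rightarrow> real"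
    and aK :: "'k::finite \<Rightarrow> 'k \<Rightarrow> real" and bL :: "'l::finite \<Rightarrow> 'l \<Rightarrow> real"
  assumes "weight_fun aG" and "weight_fun bH" and "weight_fun aK" and "weight_fun bL"
    and "graph_divides aG aK" and "graph_divides bH bL"
  shows "(strongly_disjoint aK bL \<longrightarrow> strongly_disjoint aG bH)
       \<and> (weakly_disjoint aK bL \<longrightarrow> weakly_disjoint aG bH)"
proof -
  obtain \<phi> :: "'k \<Rightarrow> 'g" where
    p1: "\<And>v. deg aG v = (\<Sum>u\<in>\<phi> -` {v}. deg aK u)" and
    p2: "\<And>v v' u. \<phi> u = v \<Longrightarrow> deg aG v * (\<Sum>u'\<in>\<phi> -` {v'}. aK u u') = deg aK u * aG v v'"
    using assms(5) unfolding graph_divides_def by metis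
  obtain \<psi> :: "'l \<Rightarrow> 'h" where
    q1: "\<And>v. deg bH v = (\<Sum>u\<in>\<psi> -` {v}. deg bL u)" and
    q2: "\<And>v v' u. \<psi> u = v \<Longrightarrow> deg bH v * (\<Sum>u'\<in>\<psi> -` {v'}. bL u u') = deg bL u * bH v v'"
    using assms(6) unfolding graph_divides_def by metis
  interpret DG: divi aG aK \<phi>
    by unfold_locales (use assms(1,3) p1 p2 in auto)
  interpret DH: divi bH bL \<psi>
    by unfold_locales (use assms(2,4) q1 q2 in auto)
  have main: "weight_joining aK bL (swp (lift \<psi> bL bH (swp (lift \<phi> aK aG \<gamma>))))
    \<and> (\<forall>g h g' h'. \<gamma> (g,h) (g',h') = (\<Sum>k\<in>\<phi> -` {g}. \<Sum>k'\<in>\<phi> -` {g'}.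
           \<Sum>l\<in>\<psi> -` {h}. \<Sum>l'\<in>\<psi> -` {h'}. lift \<psi> bL bH (swp (lift \<phi> aK aG \<gamma>)) (l,k) (l',k')))
    \<and> (\<forall>k l. deg (swp (lift \<psi> bL bH (swp (lift \<phi> aK aG \<gamma>)))) (k,l)
          = deg bL l * (deg aK k * deg \<gamma> (\<phi> k, \<psi> l) / deg aG (\<phi> k)) / deg bH (\<psi> l))"
    if J: "weight_joining aG bH \<gamma>" for \<gamma>
  proof -
    interpret A: liftctx aG aK \<phi> bH \<gamma>
      by unfold_locales (use assms(2) J in auto)
    have J1: "weight_joining bH aK (swp (lift \<phi> aK aG \<gamma>))"
      by (rule swp_joining[OF A.L_joining])
    interpret B: liftctx bH bL \<psi> aK "swp (lift \<phi> aK aG \<gamma>)"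
      by unfold_locales (use assms(3) J1 in auto)
    have c1: "weight_joining aK bL (swp (lift \<psi> bL bH (swp (lift \<phi> aK aG \<gamma>))))"
      by (rule swp_joining[OF B.L_joining])
    have c2: "\<gamma> (g,h) (g',h') = (\<Sum>k\<in>\<phi> -` {g}. \<Sum>k'\<in>\<phi> -` {g'}.
           \<Sum>l\<in>\<psi> -` {h}. \<Sum>l'\<in>\<psi> -` {h'}. lift \<psi> bL bH (swp (lift \<phi> aK aG \<gamma>)) (l,k) (l',k'))" for g h g' h'
    proof -
      have "\<gamma> (g,h) (g',h') = (\<Sum>k\<in>\<phi> -` {g}. \<Sum>k'\<in>\<phi> -` {g'}. lift \<phi> aK aG \<gamma> (k,h) (k',h'))"
        by (rule A.P1[symmetric])
      also have "\<dots> = (\<Sum>k\<in>\<phi> -` {g}. \<Sum>k'\<in>\<phi> -` {g'}. swp (lift \<phi> aK aG \<gamma>) (h,k) (h',k'))"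
        by (simp add: swp_app)
      also have "\<dots> = (\<Sum>k\<in>\<phi> -` {g}. \<Sum>k'\<in>\<phi> -` {g'}.
           \<Sum>l\<in>\<psi> -` {h}. \<Sum>l'\<in>\<psi> -` {h'}. lift \<psi> bL bH (swp (lift \<phi> aK aG \<gamma>)) (l,k) (l',k'))"
        by (simp add: B.P1)
      finally show ?thesis .
    qed
    have c3: "deg (swp (lift \<psi> bL bH (swp (lift \<phi> aK aG \<gamma>)))) (k,l)
          = deg bL l * (deg aK k * deg \<gamma> (\<phi> k, \<psi> l) / deg aG (\<phi> k)) / deg bH (\<psi> l)" for k l
      by (simp add: deg_swp B.LD A.LD)
    show ?thesis using c1 c2 c3 by blast
  qed
  have strong: "strongly_disjoint aG bH" if SD: "strongly_disjoint aK bL"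
    unfolding strongly_disjoint_def
  proof (intro allI impI)
    fix \<gamma> assume J: "weight_joining aG bH \<gamma>"
    note M = main[OF J]
    have "swp (lift \<psi> bL bH (swp (lift \<phi> aK aG \<gamma>))) = tensor_weight aK bL"
      using SD M unfolding strongly_disjoint_def by blast
    then have e: "lift \<psi> bL bH (swp (lift \<phi> aK aG \<gamma>)) = tensor_weight bL aK"
      by (metis swp_swp swp_tensor)
    have "\<gamma> (g,h) (g',h') = aG g g' * bH h h'" for g h g' h'
    proof -
      have "\<gamma> (g,h) (g',h') = (\<Sum>k\<in>\<phi> -` {g}. \<Sum>k'\<in>\<phi> -` {g'}.
           \<Sum>l\<in>\<psi> -` {h}. \<Sum>l'\<in>\<psi> -` {h'}. aK k k' * bL l l')"
        using M unfolding e tensor_weight_def by (simp add: mult.commute)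
      also have "\<dots> = (\<Sum>k\<in>\<phi> -` {g}. \<Sum>k'\<in>\<phi> -` {g'}. aK k k' * bH h h')"
        by (simp only: sum_distrib_left[symmetric] DH.F1)
      also have "\<dots> = aG g g' * bH h h'"
        by (simp only: sum_distrib_right[symmetric] DG.F1)
      finally show ?thesis .
    qed
    then show "\<gamma> = tensor_weight aG bH"
      unfolding tensor_weight_def by (auto simp: fun_eq_iff)
  qed
  have weak: "weakly_disjoint aG bH" if WD: "weakly_disjoint aK bL"
    unfolding weakly_disjoint_def
  proof (intro allI impI)
    fix \<gamma> g h assume J: "weight_joining aG bH \<gamma>"
    note M = main[OF J]
    have E: "deg bL l * (deg aK k * deg \<gamma> (\<phi> k, \<psi> l) / deg aG (\<phi> k)) / deg bH (\<psi> l)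
        = deg aK k * deg bL l" for k l
      using WD M unfolding weakly_disjoint_def by metis
    show "deg \<gamma> (g,h) = deg aG g * deg bH h"
    proof (cases "deg aG g = 0 \<or> deg bH h = 0")
      case True
      then show ?thesis using J_r_left[OF J] J_r_right[OF J] by auto
    next
      case False
      obtain k where k: "\<phi> k = g" "deg aK k \<noteq> 0"
      proof -
        have "\<exists>k\<in>\<phi> -` {g}. deg aK k \<noteq> 0"
        proof (rule ccontr)
          assume "\<not> ?thesis"
          then have "(\<Sum>k\<in>\<phi> -` {g}. deg aK k) = 0" by simp
          then show False using False p1[of g] by simp
        qed
        then show ?thesis using that by auto
      qed
      obtain l where l: "\<psi> l = h" "deg bL l \<noteq> 0"
      proof -
        have "\<exists>l\<in>\<psi> -` {h}. deg bL l \<noteq> 0"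
        proof (rule ccontr)
          assume "\<not> ?thesis"
          then have "(\<Sum>l\<in>\<psi> -` {h}. deg bL l) = 0" by simp
          then show False using False q1[of h] by simp
        qed
        then show ?thesis using that by auto
      qed
      have "deg bL l * (deg aK k * deg \<gamma> (g, h) / deg aG g) / deg bH h = deg aK k * deg bL l"
        using E[of l k] k l by simp
      then show ?thesis using False k l by (simp add: field_simps)
    qed
  qed
  show ?thesis using strong weak by blast
qed

end
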